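(* Let $u$ be a smooth absolute $E_1$-minimizer on a domain of the $xy$-plane where $D\neq0$. Then $$\alpha\Big(N+\tfrac13\alpha^{-1}HN^{\perp}\Big)\theta+N^{\perp}(\alpha)=-\alpha^2 .$$
   Context: Heisenberg group $H_1$ with contact form $\Theta=dt+x\,dy-y\,dx$; graph $t=u(x,y)$, $D=[(u_x-y)^2+(u_y+x)^2]^{1/2}$, $\cos\theta=(u_x-y)/D$, $\sin\theta=(u_y+x)/D$, $\alpha=-1/D$, $H=D^{-3}\{(u_y+x)^2u_{xx}-2(u_y+x)(u_x-y)u_{xy}+(u_x-y)^2u_{yy}\}$ (the $p$-mean curvature), $N^{\perp}=\sin\theta\,\partial_x-\cos\theta\,\partial_y$, $N=\cos\theta\,\partial_x+\sin\theta\,\partial_y$. Absolute $E_1$-minimizer: $-N^{\perp}\alpha+\frac12\alpha^2+\frac16H^2=0$ on the nonsingular domain (this is $e_1\alpha+\frac12\alpha^2+\frac16H^2=0$, $e_1$ acting as $-N^\perp$). *)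

theory Defs
  imports "HOL-Analysis.Analysis"
begin

definition px :: "(real \<times> real \<Rightarrow> real) \<Rightarrow> real \<times> real \<Rightarrow> real" where
  "px f = (\<lambda>(x, y). deriv (\<lambda>s. f (s, y)) x)"

definition py :: "(real \<times> real \<Rightarrow> real) \<Rightarrow> real \<times> real \<Rightarrow> real" where
  "py f = (\<lambda>(x, y). deriv (\<lambda>t. f (x, t)) y)"

fun Ck :: "nat \<Rightarrow> (real \<times> real \<Rightarrow> real) \<Rightarrow> (real \<times> real) set \<Rightarrow> bool" where
  "Ck 0 f U = continuous_on U f"
| "Ck (Suc k) f U =
     (continuous_on U f \<and> f differentiable_on U \<and> Ck k (px f) U \<and> Ck k (py f) U)"

definition smooth_on_plane :: "(real \<times> real \<Rightarrow> real) \<Rightarrow> (real \<times> real) set \<Rightarrow> bool" where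
  "smooth_on_plane f U = (\<forall>k. Ck k f U)"

text \<open>Quantities attached to the graph t = u(x,y) in the Heisenberg group H_1.\<close>

definition Dfun :: "(real \<times> real \<Rightarrow> real) \<Rightarrow> real \<times> real \<Rightarrow> real" where
  "Dfun u = (\<lambda>(x, y). sqrt ((px u (x, y) - y)\<^sup>2 + (py u (x, y) + x)\<^sup>2))"

definition costh :: "(real \<times> real \<Rightarrow> real) \<Rightarrow> real \<times> real \<Rightarrow> real" where
  "costh u = (\<lambda>(x, y). (px u (x, y) - y) / Dfun u (x, y))"

definition sinth :: "(real \<times> real \<Rightarrow> real) \<Rightarrow> real \<times> real \<Rightarrow> real" where
  "sinth u = (\<lambda>(x, y). (py u (x, y) + x) / Dfun u (x, y))"

definition alphafun :: "(real \<times> real \<Rightarrow> real) \<Rightarrow> real \<times> real \<Rightarrow> real" where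
  "alphafun u = (\<lambda>p. - 1 / Dfun u p)"

text \<open>p-mean curvature; u_xy is taken as px (py u).\<close>
definition Hfun :: "(real \<times> real \<Rightarrow> real) \<Rightarrow> real \<times> real \<Rightarrow> real" where
  "Hfun u = (\<lambda>(x, y). (1 / (Dfun u (x, y)) ^ 3) *
     ((py u (x, y) + x)\<^sup>2 * px (px u) (x, y)
      - 2 * (py u (x, y) + x) * (px u (x, y) - y) * px (py u) (x, y)
      + (px u (x, y) - y)\<^sup>2 * py (py u) (x, y)))"

definition Nop :: "(real \<times> real \<Rightarrow> real) \<Rightarrow> (real \<times> real \<Rightarrow> real) \<Rightarrow> real \<times> real \<Rightarrow> real" where
  "Nop u f = (\<lambda>p. costh u p * px f p + sinth u p * py f p)"

definition Nperp :: "(real \<times> real \<Rightarrow> real) \<Rightarrow> (real \<times> real \<Rightarrow> real) \<Rightarrow> real \<times> real \<Rightarrow> real" where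
  "Nperp u f = (\<lambda>p. sinth u p * px f p - costh u p * py f p)"

definition abs_E1_minimizer :: "(real \<times> real \<Rightarrow> real) \<Rightarrow> (real \<times> real) set \<Rightarrow> bool" where
  "abs_E1_minimizer u \<Omega> =
     (\<forall>p\<in>\<Omega>. - Nperp u (alphafun u) p + (1/2) * (alphafun u p)\<^sup>2 + (1/6) * (Hfun u p)\<^sup>2 = 0)"

end

theory Submission
  imports Defs
begin


lemma partial_x:
  assumes "f differentiable (at (x,y))"
  shows "((\<lambda>s. f (s,y)) has_real_derivative px f (x,y)) (at x)"
proof -
  obtain f' where f': "(f has_derivative f') (at (x,y))" using assms differentiable_def by blast
  have l: "linear f'" using f' has_derivative_linear by blast
  have "((\<lambda>s. (s,y)) has_derivative (\<lambda>h. (h,0))) (at x)"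
    by (auto intro!: derivative_eq_intros)
  from diff_chain_at[OF this, of f f'] f'
  have "((f \<circ> (\<lambda>s. (s,y))) has_derivative (f' \<circ> (\<lambda>h. (h,0)))) (at x)" by simp
  moreover have "(f' \<circ> (\<lambda>h. (h,0))) = (\<lambda>h. f' (1,0) * h)"
  proof
    fix h :: real
    have e: "(h,0) = h *\<^sub>R ((1,0)::real\<times>real)" by simp
    have "f' (h,0) = f' (h *\<^sub>R (1,0))" by (subst e) (rule refl)
    also have "\<dots> = h *\<^sub>R f' (1,0)" by (rule linear_scale[OF l])
    finally show "(f' \<circ> (\<lambda>h. (h,0))) h = f' (1,0) * h" by simp
  qed
  ultimately have d: "((\<lambda>s. f (s,y)) has_real_derivative f' (1,0)) (at x)"
    by (simp add: has_field_derivative_def o_def)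
  then have "px f (x,y) = f' (1,0)" by (simp add: px_def DERIV_imp_deriv)
  with d show ?thesis by simp
qed

lemma partial_y:
  assumes "f differentiable (at (x,y))"
  shows "((\<lambda>t. f (x,t)) has_real_derivative py f (x,y)) (at y)"
proof -
  obtain f' where f': "(f has_derivative f') (at (x,y))" using assms differentiable_def by blast
  have l: "linear f'" using f' has_derivative_linear by blast
  have "((\<lambda>t. (x,t)) has_derivative (\<lambda>h. (0,h))) (at y)"
    by (auto intro!: derivative_eq_intros)
  from diff_chain_at[OF this, of f f'] f'
  have "((f \<circ> (\<lambda>t. (x,t))) has_derivative (f' \<circ> (\<lambda>h. (0,h)))) (at y)" by simp
  moreover have "(f' \<circ> (\<lambda>h. (0,h))) = (\<lambda>h. f' (0,1) * h)"
  proof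
    fix h :: real
    have e: "(0,h) = h *\<^sub>R ((0,1)::real\<times>real)" by simp
    have "f' (0,h) = f' (h *\<^sub>R (0,1))" by (subst e) (rule refl)
    also have "\<dots> = h *\<^sub>R f' (0,1)" by (rule linear_scale[OF l])
    finally show "(f' \<circ> (\<lambda>h. (0,h))) h = f' (0,1) * h" by simp
  qed
  ultimately have d: "((\<lambda>t. f (x,t)) has_real_derivative f' (0,1)) (at y)"
    by (simp add: has_field_derivative_def o_def)
  then have "py f (x,y) = f' (0,1)" by (simp add: py_def DERIV_imp_deriv)
  with d show ?thesis by simp
qed

lemma dist_sq_le:
  fixes s t x0 y0 h :: real
  assumes "\<bar>s - x0\<bar> \<le> h" "\<bar>t - y0\<bar> \<le> h"
  shows "dist (s,t) (x0,y0) \<le> 2*h"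
proof -
  have h0: "0 \<le> h" using assms by linarith
  have "(s-x0)^2 \<le> h^2" using assms(1) h0 by (metis abs_le_square_iff abs_of_nonneg)
  moreover have "(t-y0)^2 \<le> h^2" using assms(2) h0 by (metis abs_le_square_iff abs_of_nonneg)
  ultimately have "(s-x0)^2 + (t-y0)^2 \<le> 2*h^2" by linarith
  moreover have "0 \<le> h^2" by simp
  ultimately have "(s-x0)^2 + (t-y0)^2 \<le> 4*h^2" by linarith
  also have "4*h^2 = (2*h)^2" by (simp add: power2_eq_square)
  finally have "(s-x0)^2 + (t-y0)^2 \<le> (2*h)^2" .
  then have "sqrt ((s-x0)^2 + (t-y0)^2) \<le> sqrt ((2*h)^2)" by (rule real_sqrt_le_mono)
  also have "\<dots> = \<bar>2*h\<bar>" by (rule real_sqrt_abs)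
  also have "\<dots> = 2*h" using h0 by simp
  finally have "sqrt ((s-x0)^2 + (t-y0)^2) \<le> 2*h" .
  then show ?thesis by (simp add: dist_Pair_Pair dist_real_def)
qed



lemma clairaut:
  fixes f :: "real \<times> real \<Rightarrow> real"
  assumes U: "open U" and zU: "(x0,y0) \<in> U"
    and d0: "f differentiable_on U" and dx: "px f differentiable_on U" and dy: "py f differentiable_on U"
    and cxy: "continuous_on U (px (py f))" and cyx: "continuous_on U (py (px f))"
  shows "px (py f) (x0,y0) = py (px f) (x0,y0)"
proof (rule ccontr)
  assume ne: "px (py f) (x0,y0) \<noteq> py (px f) (x0,y0)"
  define e where "e = \<bar>px (py f) (x0,y0) - py (px f) (x0,y0)\<bar>"
  have e0: "e > 0" using ne by (simp add: e_def)
  obtain r where r0: "r > 0" and rU: "ball (x0,y0) r \<subseteq> U" using U zU open_contains_ball by blast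
  obtain d1 where d1: "d1 > 0" "\<forall>w\<in>U. dist w (x0,y0) < d1 \<longrightarrow> dist (px (py f) w) (px (py f) (x0,y0)) < e/2"
    using cxy zU e0 unfolding continuous_on_iff by (meson half_gt_zero)
  obtain d2 where d2: "d2 > 0" "\<forall>w\<in>U. dist w (x0,y0) < d2 \<longrightarrow> dist (py (px f) w) (py (px f) (x0,y0)) < e/2"
    using cyx zU e0 unfolding continuous_on_iff by (meson half_gt_zero)
  define m where "m = min r (min d1 d2)"
  have m0: "m > 0" using r0 d1 d2 by (simp add: m_def)
  define h where "h = m/3"
  have h0: "h > 0" using m0 by (simp add: h_def)
  have inm: "dist (s,t) (x0,y0) < m" if "x0 \<le> s" "s \<le> x0 + h" "y0 \<le> t" "t \<le> y0 + h" for s t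
  proof -
    have "dist (s,t) (x0,y0) \<le> 2*h" by (rule dist_sq_le) (use that in auto)
    then show ?thesis using m0 by (simp add: h_def)
  qed
  have inU: "(s,t) \<in> U" if "x0 \<le> s" "s \<le> x0 + h" "y0 \<le> t" "t \<le> y0 + h" for s t
  proof -
    have "dist (s,t) (x0,y0) < r" using inm[OF that] by (simp add: m_def)
    then show ?thesis using rU by (auto simp: dist_commute)
  qed
  have D0: "f differentiable (at w)" if "w \<in> U" for w
    using d0 U that differentiable_on_eq_differentiable_at by blast
  have Dx: "px f differentiable (at w)" if "w \<in> U" for w
    using dx U that differentiable_on_eq_differentiable_at by blast
  have Dy: "py f differentiable (at w)" if "w \<in> U" for w
    using dy U that differentiable_on_eq_differentiable_at by blast
  define \<Delta> where "\<Delta> = f (x0+h,y0+h) - f (x0+h,y0) - f (x0,y0+h) + f (x0,y0)"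
  have "\<exists>z. x0 < z \<and> z < x0 + h \<and>
      (f (x0+h,y0+h) - f (x0+h,y0)) - (f (x0,y0+h) - f (x0,y0)) = (x0 + h - x0) * (px f (z,y0+h) - px f (z,y0))"
  proof (rule MVT2[where f="\<lambda>s. f (s,y0+h) - f (s,y0)"])
    show "x0 < x0 + h" using h0 by simp
    fix s assume "x0 \<le> s" "s \<le> x0 + h"
    then have "(s,y0+h) \<in> U" "(s,y0) \<in> U" using inU h0 by auto
    then show "((\<lambda>s. f (s,y0+h) - f (s,y0)) has_real_derivative px f (s,y0+h) - px f (s,y0)) (at s)"
      by (intro DERIV_diff partial_x D0)
  qed
  then obtain \<xi> where \<xi>: "x0 < \<xi>" "\<xi> < x0 + h" "\<Delta> = h * (px f (\<xi>,y0+h) - px f (\<xi>,y0))"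
    by (auto simp: \<Delta>_def algebra_simps)
  have "\<exists>z. y0 < z \<and> z < y0 + h \<and> px f (\<xi>,y0+h) - px f (\<xi>,y0) = (y0 + h - y0) * py (px f) (\<xi>,z)"
  proof (rule MVT2[where f="\<lambda>t. px f (\<xi>,t)"])
    show "y0 < y0 + h" using h0 by simp
    fix t assume "y0 \<le> t" "t \<le> y0 + h"
    then have "(\<xi>,t) \<in> U" using inU \<xi> by auto
    then show "((\<lambda>t. px f (\<xi>,t)) has_real_derivative py (px f) (\<xi>,t)) (at t)"
      by (intro partial_y Dx)
  qed
  then obtain \<eta> where \<eta>: "y0 < \<eta>" "\<eta> < y0 + h" "\<Delta> = h * (h * py (px f) (\<xi>,\<eta>))"
    using \<xi> by auto
  have "\<exists>z. y0 < z \<and> z < y0 + h \<and>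
      (f (x0+h,y0+h) - f (x0,y0+h)) - (f (x0+h,y0) - f (x0,y0)) = (y0 + h - y0) * (py f (x0+h,z) - py f (x0,z))"
  proof (rule MVT2[where f="\<lambda>t. f (x0+h,t) - f (x0,t)"])
    show "y0 < y0 + h" using h0 by simp
    fix t assume "y0 \<le> t" "t \<le> y0 + h"
    then have "(x0+h,t) \<in> U" "(x0,t) \<in> U" using inU h0 by auto
    then show "((\<lambda>t. f (x0+h,t) - f (x0,t)) has_real_derivative py f (x0+h,t) - py f (x0,t)) (at t)"
      by (intro DERIV_diff partial_y D0)
  qed
  then obtain \<eta>' where \<eta>': "y0 < \<eta>'" "\<eta>' < y0 + h" "\<Delta> = h * (py f (x0+h,\<eta>') - py f (x0,\<eta>'))"
    by (auto simp: \<Delta>_def algebra_simps)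
  have "\<exists>z. x0 < z \<and> z < x0 + h \<and> py f (x0+h,\<eta>') - py f (x0,\<eta>') = (x0 + h - x0) * px (py f) (z,\<eta>')"
  proof (rule MVT2[where f="\<lambda>s. py f (s,\<eta>')"])
    show "x0 < x0 + h" using h0 by simp
    fix s assume "x0 \<le> s" "s \<le> x0 + h"
    then have "(s,\<eta>') \<in> U" using inU \<eta>' by auto
    then show "((\<lambda>s. py f (s,\<eta>')) has_real_derivative px (py f) (s,\<eta>')) (at s)"
      by (intro partial_x Dy)
  qed
  then obtain \<xi>' where \<xi>': "x0 < \<xi>'" "\<xi>' < x0 + h" "\<Delta> = h * (h * px (py f) (\<xi>',\<eta>'))"
    using \<eta>' by auto
  have eq: "py (px f) (\<xi>,\<eta>) = px (py f) (\<xi>',\<eta>')" using \<eta>(3) \<xi>'(3) h0 by simp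
  have a1: "dist (px (py f) (\<xi>',\<eta>')) (px (py f) (x0,y0)) < e/2"
    using d1(2) inU[of \<xi>' \<eta>'] inm[of \<xi>' \<eta>'] \<xi>' \<eta>' by (simp add: m_def)
  have a2: "dist (py (px f) (\<xi>,\<eta>)) (py (px f) (x0,y0)) < e/2"
    using d2(2) inU[of \<xi> \<eta>] inm[of \<xi> \<eta>] \<xi> \<eta> by (simp add: m_def)
  from a1 a2 eq have "e < e" unfolding e_def dist_real_def
    using abs_triangle_ineq[of "px (py f) (x0,y0) - px (py f) (\<xi>',\<eta>')" "px (py f) (\<xi>',\<eta>') - py (px f) (x0,y0)"]
    by (simp add: abs_minus_commute)
  then show False by simp
qed



lemma quot_deriv:
  fixes a b :: "real \<Rightarrow> real"
  assumes da: "(a has_real_derivative a') (at x)" and db: "(b has_real_derivative b') (at x)"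
    and nz: "(a x)^2 + (b x)^2 \<noteq> 0"
  shows "((\<lambda>s. a s / sqrt ((a s)^2 + (b s)^2)) has_real_derivative
     (a' * sqrt ((a x)^2 + (b x)^2) - a x * ((a x * a' + b x * b') / sqrt ((a x)^2 + (b x)^2)))
       / (sqrt ((a x)^2 + (b x)^2))^2) (at x)"
proof -
  have pos: "0 < (a x)^2 + (b x)^2" using nz by (simp add: add_nonneg_nonneg order_le_neq_trans sum_power2_gt_zero_iff)
  have dq: "((\<lambda>s. (a s)^2 + (b s)^2) has_real_derivative 2 * a x * a' + 2 * b x * b') (at x)"
    using DERIV_add[OF DERIV_power[OF da, of 2] DERIV_power[OF db, of 2]] by (simp add: algebra_simps)
  have ds: "((\<lambda>s. sqrt ((a s)^2 + (b s)^2)) has_real_derivative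
      inverse (sqrt ((a x)^2 + (b x)^2)) / 2 * (2 * a x * a' + 2 * b x * b')) (at x)"
    by (rule DERIV_chain2[OF DERIV_real_sqrt[OF pos] dq])
  have "0 < sqrt ((a x)^2 + (b x)^2)" using pos by (rule real_sqrt_gt_zero)
  then have sn0: "sqrt ((a x)^2 + (b x)^2) \<noteq> 0" by linarith
  have "inverse (sqrt ((a x)^2 + (b x)^2)) / 2 * (2 * a x * a' + 2 * b x * b')
        = (a x * a' + b x * b') / sqrt ((a x)^2 + (b x)^2)"
    using sn0 by (simp add: field_simps)
  note ds = ds[unfolded this]
  have ds': "((\<lambda>s. sqrt ((a s)^2 + (b s)^2)) has_real_derivative
      (a x * a' + b x * b') / sqrt ((a x)^2 + (b x)^2)) (at x)" by (rule ds)
  from DERIV_divide[OF da ds' sn0] show ?thesis by (simp only: power2_eq_square)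
qed

lemma theta_deriv:
  fixes a b th :: "real \<Rightarrow> real"
  assumes da: "(a has_real_derivative a') (at x)" and db: "(b has_real_derivative b') (at x)"
    and dt: "(th has_real_derivative t') (at x)"
    and S: "open S" "x \<in> S"
    and eqs: "\<forall>s\<in>S. cos (th s) = a s / sqrt ((a s)^2 + (b s)^2) \<and> sin (th s) = b s / sqrt ((a s)^2 + (b s)^2)"
    and nz: "(a x)^2 + (b x)^2 \<noteq> 0"
  shows "t' = (a x * b' - b x * a') / ((a x)^2 + (b x)^2)"
proof -
  define D where "D = sqrt ((a x)^2 + (b x)^2)"
  have pos: "0 < (a x)^2 + (b x)^2" using nz by (simp add: add_nonneg_nonneg order_le_neq_trans sum_power2_gt_zero_iff)
  have D0: "D > 0" using pos by (simp add: D_def)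
  have D2: "D^2 = (a x)^2 + (b x)^2" using pos by (simp add: D_def)
  have nz2: "(b x)^2 + (a x)^2 \<noteq> 0" using nz by (simp add: add.commute)
  have dc: "((\<lambda>s. cos (th s)) has_real_derivative - sin (th x) * t') (at x)"
    using DERIV_chain2[OF DERIV_cos dt] by simp
  have dsn: "((\<lambda>s. sin (th s)) has_real_derivative cos (th x) * t') (at x)"
    using DERIV_chain2[OF DERIV_sin dt] by simp
  have c1: "((\<lambda>s. a s / sqrt ((a s)^2 + (b s)^2)) has_real_derivative - sin (th x) * t') (at x)"
    by (rule has_field_derivative_transform_within_open[OF dc S]) (use eqs in auto)
  have s1: "((\<lambda>s. b s / sqrt ((a s)^2 + (b s)^2)) has_real_derivative cos (th x) * t') (at x)"
    by (rule has_field_derivative_transform_within_open[OF dsn S]) (use eqs in auto)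
  have s1': "((\<lambda>s. b s / sqrt ((b s)^2 + (a s)^2)) has_real_derivative cos (th x) * t') (at x)"
    using s1 by (simp add: add.commute)
  have e1: "- sin (th x) * t' = (a' * D - a x * ((a x * a' + b x * b') / D)) / D^2"
    using DERIV_unique[OF c1 quot_deriv[OF da db nz]] by (simp add: D_def)
  have e2: "cos (th x) * t' = (b' * D - b x * ((b x * b' + a x * a') / D)) / D^2"
    using DERIV_unique[OF s1' quot_deriv[OF db da nz2]] by (simp add: D_def add.commute)
  have cx: "cos (th x) = a x / D" "sin (th x) = b x / D" using eqs S by (auto simp: D_def)
  have "t' = cos (th x) * (cos (th x) * t') + sin (th x) * (sin (th x) * t')"
  proof -
    have "t' = ((sin (th x))^2 + (cos (th x))^2) * t'" by simp
    then show ?thesis by (simp only: power2_eq_square algebra_simps)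
  qed
  also have "\<dots> = (a x / D) * ((b' * D - b x * ((b x * b' + a x * a') / D)) / D^2)
      - (b x / D) * ((a' * D - a x * ((a x * a' + b x * b') / D)) / D^2)"
  proof -
    have st: "sin (th x) * t' = - ((a' * D - a x * ((a x * a' + b x * b') / D)) / D^2)"
      using e1 by simp
    show ?thesis unfolding e2 st unfolding cx by simp
  qed
  also have "\<dots> = (a x * b' - b x * a') / D^2"
    using D0 by (simp add: field_simps)
  finally show ?thesis using D2 by simp
qed

lemma alpha_deriv:
  fixes a b :: "real \<Rightarrow> real"
  assumes da: "(a has_real_derivative a') (at x)" and db: "(b has_real_derivative b') (at x)"
    and nz: "(a x)^2 + (b x)^2 \<noteq> 0"
  shows "((\<lambda>s. - 1 / sqrt ((a s)^2 + (b s)^2)) has_real_derivative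
     (a x * a' + b x * b') / (sqrt ((a x)^2 + (b x)^2))^3) (at x)"
proof -
  have pos: "0 < (a x)^2 + (b x)^2" using nz by (simp add: add_nonneg_nonneg order_le_neq_trans sum_power2_gt_zero_iff)
  have dq: "((\<lambda>s. (a s)^2 + (b s)^2) has_real_derivative 2 * a x * a' + 2 * b x * b') (at x)"
    using DERIV_add[OF DERIV_power[OF da, of 2] DERIV_power[OF db, of 2]] by (simp add: algebra_simps)
  have ds: "((\<lambda>s. sqrt ((a s)^2 + (b s)^2)) has_real_derivative
      inverse (sqrt ((a x)^2 + (b x)^2)) / 2 * (2 * a x * a' + 2 * b x * b')) (at x)"
    by (rule DERIV_chain2[OF DERIV_real_sqrt[OF pos] dq])
  have "0 < sqrt ((a x)^2 + (b x)^2)" using pos by (rule real_sqrt_gt_zero)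
  then have sn: "sqrt ((a x)^2 + (b x)^2) \<noteq> 0" by linarith
  have "((\<lambda>s. - 1 / sqrt ((a s)^2 + (b s)^2)) has_real_derivative
     (0 * sqrt ((a x)^2 + (b x)^2) - (- 1) * (inverse (sqrt ((a x)^2 + (b x)^2)) / 2 * (2 * a x * a' + 2 * b x * b'))) / (sqrt ((a x)^2 + (b x)^2) * sqrt ((a x)^2 + (b x)^2))) (at x)"
    by (rule DERIV_divide[OF DERIV_const ds sn])
  moreover have "(0 * sqrt ((a x)^2 + (b x)^2) - (- 1) * (inverse (sqrt ((a x)^2 + (b x)^2)) / 2 * (2 * a x * a' + 2 * b x * b'))) / (sqrt ((a x)^2 + (b x)^2) * sqrt ((a x)^2 + (b x)^2))
      = (a x * a' + b x * b') / (sqrt ((a x)^2 + (b x)^2))^3"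
  proof -
    have gen: "(0 * R - (- 1) * (inverse R / 2 * (2 * a x * a' + 2 * b x * b'))) / (R * R)
      = (a x * a' + b x * b') / R^3" if "R \<noteq> 0" for R :: real
      using that by (simp add: field_simps power3_eq_cube)
    show ?thesis by (rule gen[OF sn])
  qed
  ultimately show ?thesis by simp
qed



lemma final_alg:
  fixes a b A B P R Tx Ty Ax Ay H alp c s :: real
  assumes R0: "R > 0" and R2: "R^2 = a^2 + b^2"
    and Tx: "Tx = (a * (P + 1) - b * A) / (a^2 + b^2)"
    and Ty: "Ty = (a * B - b * (P - 1)) / (a^2 + b^2)"
    and Ax: "Ax = (a * A + b * (P + 1)) / R^3"
    and Ay: "Ay = (a * (P - 1) + b * B) / R^3"
    and H: "H = 1 / R^3 * (b^2 * A - 2 * b * a * P + a^2 * B)"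
    and alp: "alp = - 1 / R" and c: "c = a / R" and s: "s = b / R"
    and mn: "- (s * Ax - c * Ay) + 1/2 * alp^2 + 1/6 * H^2 = 0"
  shows "alp * (c * Tx + s * Ty + 1/3 * (1 / alp) * H * (s * Tx - c * Ty)) + (s * Ax - c * Ay) = - (alp^2)"
proof -
  have Tx': "Tx = (a * (P + 1) - b * A) / R^2" using Tx R2 by simp
  have Ty': "Ty = (a * B - b * (P - 1)) / R^2" using Ty R2 by simp
  have alp0: "alp \<noteq> 0" using alp R0 by simp
  have NpT: "s * Tx - c * Ty = - H"
    unfolding Tx' Ty' H s c using R0 by (simp add: field_simps power3_eq_cube power2_eq_square)
  have alp2: "alp^2 = (a^2 + b^2) / R^4"
  proof -
    have "alp^2 = 1 / R^2" using alp by (simp add: power_divide)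
    also have "\<dots> = R^2 / R^4" using R0 by (simp add: power4_eq_xxxx power2_eq_square)
    finally show ?thesis using R2 by simp
  qed
  have key: "alp * (c * Tx + s * Ty) + (s * Ax - c * Ay) = 2 * (s * Ax - c * Ay) - 2 * alp^2"
    unfolding alp2 unfolding Tx' Ty' Ax Ay alp s c using R0
    by (simp add: field_simps power3_eq_cube power2_eq_square power4_eq_xxxx)
  have e1: "alp * (c * Tx + s * Ty + 1/3 * (1 / alp) * H * (s * Tx - c * Ty))
      = alp * (c * Tx + s * Ty) - 1/3 * H^2"
  proof -
    have g: "alp * (X + 1/3 * (1 / alp) * H * Y) = alp * X + 1/3 * H * Y" for X Y
      using alp0 by (simp add: field_simps)
    show ?thesis unfolding g NpT by (simp add: power2_eq_square)
  qed
  have lin: "\<And>X W S A2 H2 :: real. X = W - 1/3 * H2 \<Longrightarrow> W + S = 2 * S - 2 * A2 \<Longrightarrow>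
      - S + 1/2 * A2 + 1/6 * H2 = 0 \<Longrightarrow> X + S = - A2" by linarith
  show ?thesis by (rule lin[OF e1 key mn])
qed



theorem proposition3p1:
  fixes u :: "real \<times> real \<Rightarrow> real" and \<Omega> :: "(real \<times> real) set"
  assumes "open \<Omega>" and "connected \<Omega>"
    and "smooth_on_plane u \<Omega>"
    and "\<forall>p\<in>\<Omega>. Dfun u p \<noteq> 0"
    and "abs_E1_minimizer u \<Omega>"
  shows "\<forall>U (\<theta> :: real \<times> real \<Rightarrow> real).
           open U \<and> U \<subseteq> \<Omega> \<and> \<theta> differentiable_on U \<and>
           (\<forall>p\<in>U. cos (\<theta> p) = costh u p \<and> sin (\<theta> p) = sinth u p) \<longrightarrow>
           (\<forall>p\<in>U. alphafun u p * (Nop u \<theta> p + (1/3) * (1 / alphafun u p) * Hfun u p * Nperp u \<theta> p)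
                    + Nperp u (alphafun u) p = - (alphafun u p)\<^sup>2)"
proof (intro allI impI ballI)
  fix U and \<theta> :: "real \<times> real \<Rightarrow> real" and p
  assume hyp: "open U \<and> U \<subseteq> \<Omega> \<and> \<theta> differentiable_on U \<and>
           (\<forall>p\<in>U. cos (\<theta> p) = costh u p \<and> sin (\<theta> p) = sinth u p)"
  assume pU: "p \<in> U"
  obtain x y where p: "p = (x,y)" by (cases p)
  have oU: "open U" and UO: "U \<subseteq> \<Omega>" and thd: "\<theta> differentiable_on U"
    and cs: "\<forall>p\<in>U. cos (\<theta> p) = costh u p \<and> sin (\<theta> p) = sinth u p" using hyp by auto
  have xyU: "(x,y) \<in> U" using pU p by simp
  have xyO: "(x,y) \<in> \<Omega>" using xyU UO by auto
  have C2: "Ck (Suc (Suc 0)) u \<Omega>" using assms(3) unfolding smooth_on_plane_def by blast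
  then have ud: "u differentiable_on \<Omega>" and uxd: "px u differentiable_on \<Omega>" and uyd: "py u differentiable_on \<Omega>"
    and cxy: "continuous_on \<Omega> (px (py u))" and cyx: "continuous_on \<Omega> (py (px u))" by auto
  have clair: "px (py u) (x,y) = py (px u) (x,y)"
    by (rule clairaut[OF assms(1) xyO ud uxd uyd cxy cyx])
  have uxD: "px u differentiable (at (x,y))" using uxd assms(1) xyO differentiable_on_eq_differentiable_at by blast
  have uyD: "py u differentiable (at (x,y))" using uyd assms(1) xyO differentiable_on_eq_differentiable_at by blast
  have thD: "\<theta> differentiable (at (x,y))" using thd oU xyU differentiable_on_eq_differentiable_at by blast
  define a0 where "a0 = px u (x,y) - y"
  define b0 where "b0 = py u (x,y) + x"
  define A where "A = px (px u) (x,y)"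
  define P where "P = px (py u) (x,y)"
  define B where "B = py (py u) (x,y)"
  define R where "R = sqrt (a0^2 + b0^2)"
  have RD: "Dfun u (x,y) = R" by (simp add: Dfun_def R_def a0_def b0_def)
  have R0': "R \<noteq> 0" using assms(4) xyO RD by auto
  have nz: "a0^2 + b0^2 \<noteq> 0" using R0' by (auto simp: R_def)
  have "R \<ge> 0" by (simp add: R_def)
  then have R0: "R > 0" using R0' by linarith
  have R2: "R^2 = a0^2 + b0^2" by (simp add: R_def)
  have dax: "((\<lambda>s. px u (s,y) - y) has_real_derivative A) (at x)"
    using DERIV_diff[OF partial_x[OF uxD] DERIV_const[of y]] by (simp add: A_def)
  have dbx: "((\<lambda>s. py u (s,y) + s) has_real_derivative P + 1) (at x)"
    using DERIV_add[OF partial_x[OF uyD] DERIV_ident] by (simp add: P_def)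
  have day: "((\<lambda>t. px u (x,t) - t) has_real_derivative P - 1) (at y)"
    using DERIV_diff[OF partial_y[OF uxD] DERIV_ident] by (simp add: P_def clair)
  have dby: "((\<lambda>t. py u (x,t) + x) has_real_derivative B) (at y)"
    using DERIV_add[OF partial_y[OF uyD] DERIV_const[of x]] by (simp add: B_def)
  have Sx: "open ((\<lambda>s. (s,y)) -` U)" by (rule open_vimage[OF oU]) (auto intro!: continuous_intros)
  have Sy: "open ((\<lambda>t. (x,t)) -` U)" by (rule open_vimage[OF oU]) (auto intro!: continuous_intros)
  have Tx: "px \<theta> (x,y) = (a0 * (P + 1) - b0 * A) / (a0^2 + b0^2)"
  proof -
    have "px \<theta> (x,y) = ((\<lambda>s. px u (s,y) - y) x * (P + 1) - (\<lambda>s. py u (s,y) + s) x * A) /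
        (((\<lambda>s. px u (s,y) - y) x)^2 + ((\<lambda>s. py u (s,y) + s) x)^2)"
    proof (rule theta_deriv[OF dax dbx partial_x[OF thD] Sx])
      show "x \<in> (\<lambda>s. (s,y)) -` U" using xyU by simp
      show "\<forall>s\<in>(\<lambda>s. (s,y)) -` U. cos (\<theta> (s,y)) = (px u (s,y) - y) / sqrt ((px u (s,y) - y)^2 + (py u (s,y) + s)^2)
          \<and> sin (\<theta> (s,y)) = (py u (s,y) + s) / sqrt ((px u (s,y) - y)^2 + (py u (s,y) + s)^2)"
        using cs by (auto simp: costh_def sinth_def Dfun_def)
      show "((\<lambda>s. px u (s,y) - y) x)^2 + ((\<lambda>s. py u (s,y) + s) x)^2 \<noteq> 0"
        using nz by (simp add: a0_def b0_def)
    qed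
    then show ?thesis by (simp add: a0_def b0_def)
  qed
  have Ty: "py \<theta> (x,y) = (a0 * B - b0 * (P - 1)) / (a0^2 + b0^2)"
  proof -
    have "py \<theta> (x,y) = ((\<lambda>t. px u (x,t) - t) y * B - (\<lambda>t. py u (x,t) + x) y * (P - 1)) /
        (((\<lambda>t. px u (x,t) - t) y)^2 + ((\<lambda>t. py u (x,t) + x) y)^2)"
    proof (rule theta_deriv[OF day dby partial_y[OF thD] Sy])
      show "y \<in> (\<lambda>t. (x,t)) -` U" using xyU by simp
      show "\<forall>t\<in>(\<lambda>t. (x,t)) -` U. cos (\<theta> (x,t)) = (px u (x,t) - t) / sqrt ((px u (x,t) - t)^2 + (py u (x,t) + x)^2)
          \<and> sin (\<theta> (x,t)) = (py u (x,t) + x) / sqrt ((px u (x,t) - t)^2 + (py u (x,t) + x)^2)"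
        using cs by (auto simp: costh_def sinth_def Dfun_def)
      show "((\<lambda>t. px u (x,t) - t) y)^2 + ((\<lambda>t. py u (x,t) + x) y)^2 \<noteq> 0"
        using nz by (simp add: a0_def b0_def)
    qed
    then show ?thesis by (simp add: a0_def b0_def)
  qed
  have Ax: "px (alphafun u) (x,y) = (a0 * A + b0 * (P + 1)) / R^3"
  proof -
    have f: "(\<lambda>s. alphafun u (s,y)) = (\<lambda>s. - 1 / sqrt ((px u (s,y) - y)^2 + (py u (s,y) + s)^2))"
      by (simp add: alphafun_def Dfun_def)
    have "((\<lambda>s. alphafun u (s,y)) has_real_derivative (a0 * A + b0 * (P + 1)) / R^3) (at x)"
      unfolding f using alpha_deriv[OF dax dbx] nz by (simp add: a0_def b0_def R_def)
    then show ?thesis by (simp add: px_def DERIV_imp_deriv)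
  qed
  have Ay: "py (alphafun u) (x,y) = (a0 * (P - 1) + b0 * B) / R^3"
  proof -
    have f: "(\<lambda>t. alphafun u (x,t)) = (\<lambda>t. - 1 / sqrt ((px u (x,t) - t)^2 + (py u (x,t) + x)^2))"
      by (simp add: alphafun_def Dfun_def)
    have "((\<lambda>t. alphafun u (x,t)) has_real_derivative (a0 * (P - 1) + b0 * B) / R^3) (at y)"
      unfolding f using alpha_deriv[OF day dby] nz by (simp add: a0_def b0_def R_def)
    then show ?thesis by (simp add: py_def DERIV_imp_deriv)
  qed
  have H: "Hfun u (x,y) = 1 / R^3 * (b0^2 * A - 2 * b0 * a0 * P + a0^2 * B)"
    by (simp add: Hfun_def RD a0_def b0_def A_def B_def P_def)
  have al: "alphafun u (x,y) = - 1 / R" by (simp add: alphafun_def RD)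
  have c: "costh u (x,y) = a0 / R" by (simp add: costh_def RD a0_def)
  have s: "sinth u (x,y) = b0 / R" by (simp add: sinth_def RD b0_def)
  have mn: "- (sinth u (x,y) * px (alphafun u) (x,y) - costh u (x,y) * py (alphafun u) (x,y))
      + 1/2 * (alphafun u (x,y))^2 + 1/6 * (Hfun u (x,y))^2 = 0"
    using assms(5) xyO unfolding abs_E1_minimizer_def Nperp_def by auto
  show "alphafun u p * (Nop u \<theta> p + (1/3) * (1 / alphafun u p) * Hfun u p * Nperp u \<theta> p)
                    + Nperp u (alphafun u) p = - (alphafun u p)\<^sup>2"
    unfolding p Nop_def Nperp_def
    by (rule final_alg[OF R0 R2 Tx Ty Ax Ay H al c s mn])
qed

end
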